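(* Let $n = 4k+1$ with $k\ge 1$ an integer, and let $m \ge 3n-2$. Then every product $(a,a+2)(b,b+2)\in S_m$ of two even-string transpositions, and every such product of two odd-string transpositions, with $a,a+2,b,b+2$ four distinct numbers, is a product of $n$-crossing permutations over $S_m$.
   Context: For integers $2\le n\le m$ and $1 \le j \le m-n+1$, the $n$-crossing permutation $\pi_j\in S_m$ is $\pi_j=(j,\,j+n-1)(j+1,\,j+n-2)\cdots$, i.e. the involution sending $i \mapsto 2j+n-1-i$ for $j\le i\le j+n-1$ and fixing all other elements of $\{1,\dots,m\}$. The $n$-crossing permutations over $S_m$ are $\pi_1,\dots,\pi_{m-n+1}$. A transposition $(i,i+2)\in S_m$ (with $1\le i\le m-2$) is called an even-string transposition if $i$ is even and an odd-string transposition if $i$ is odd. *)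

theory Defs
  imports "HOL-Combinatorics.Transposition"
begin

text \<open>Permutations of S_m are modelled as functions nat => nat that act on {1..m}
  and fix every other number.\<close>

definition crossing :: "nat \<Rightarrow> nat \<Rightarrow> nat \<Rightarrow> nat" where
  "crossing n j = (\<lambda>i. if j \<le> i \<and> i \<le> j + n - 1 then 2 * j + n - 1 - i else i)"

definition crossing_product :: "nat \<Rightarrow> nat \<Rightarrow> (nat \<Rightarrow> nat) \<Rightarrow> bool" where
  "crossing_product n m p \<longleftrightarrow>
     (\<exists>js. set js \<subseteq> {1..m - n + 1} \<and> p = foldr (\<circ>) (map (crossing n) js) id)"

end

theory Submission imports Defs begin

definition cyc :: "nat \<Rightarrow> nat \<Rightarrow> nat \<Rightarrow> nat \<Rightarrow> nat" where
  "cyc x y z = transpose x y \<circ> transpose y z"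

lemma foldr_comp_gen: "foldr (\<circ>) xs g = foldr (\<circ>) xs id \<circ> g"
  by (induction xs) auto

lemma cp_comp:
  assumes "crossing_product n m f" "crossing_product n m g"
  shows "crossing_product n m (f \<circ> g)"
proof -
  obtain js1 where 1: "set js1 \<subseteq> {1..m - n + 1}" "f = foldr (\<circ>) (map (crossing n) js1) id"
    using assms(1) unfolding crossing_product_def by blast
  obtain js2 where 2: "set js2 \<subseteq> {1..m - n + 1}" "g = foldr (\<circ>) (map (crossing n) js2) id"
    using assms(2) unfolding crossing_product_def by blast
  have "f \<circ> g = foldr (\<circ>) (map (crossing n) (js1 @ js2)) id"
    using 1 2 by (simp add: foldr_comp_gen[of _ "foldr (\<circ>) (map (crossing n) js2) id"])
  then show ?thesis unfolding crossing_product_def using 1 2 by (intro exI[of _ "js1 @ js2"]) auto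
qed

lemma cp_cross:
  assumes "1 \<le> j" "j \<le> m - n + 1"
  shows "crossing_product n m (crossing n j)"
  unfolding crossing_product_def using assms by (intro exI[of _ "[j]"]) auto

lemma cross_invol:
  assumes "n \<ge> 1" shows "crossing n j (crossing n j i) = i"
  using assms unfolding crossing_def by auto

lemma P1pt:
  assumes "k \<ge> 1"
  shows "crossing (4*k+1) j (crossing (4*k+1) (j+1) (crossing (4*k+1) (j+2) (crossing (4*k+1) (j+1) i)))
     = cyc j (j+4*k) (j+4*k+2) i"
proof -
  consider "i < j" | "i = j" | "i = j+1" | "j+2 \<le> i \<and> i \<le> j+4*k-1" | "i = j+4*k" | "i = j+4*k+1"
    | "i = j+4*k+2" | "i > j+4*k+2" using assms by linarith
  then show ?thesis
    using assms by cases (auto simp: crossing_def cyc_def transpose_def)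
qed

lemma cyc_rot: "distinct [x,y,z] \<Longrightarrow> cyc y z x = cyc x y z"
  unfolding cyc_def fun_eq_iff transpose_def by auto

lemma cyc_swap: "distinct [x,y,z] \<Longrightarrow> cyc y x z = cyc x y z \<circ> cyc x y z"
  unfolding cyc_def fun_eq_iff transpose_def by auto

lemma cyc_A: "distinct [a,b,c,d] \<Longrightarrow> cyc a d c = cyc a b c \<circ> cyc a d b"
  unfolding cyc_def fun_eq_iff transpose_def by auto

lemma cyc_conj:
  assumes "\<And>i. s (s i) = i"
  shows "s \<circ> cyc x y z \<circ> s = cyc (s x) (s y) (s z)"
proof -
  have eq: "\<And>a b. (s a = b) = (a = s b)" using assms by metis
  show ?thesis unfolding cyc_def fun_eq_iff transpose_def o_def by (simp add: eq assms)
qed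

lemma target: "distinct [a,c,b,d] \<Longrightarrow> transpose a c \<circ> transpose b d = cyc a b c \<circ> cyc a b d"
  unfolding cyc_def fun_eq_iff transpose_def by auto

definition Tr :: "nat \<Rightarrow> nat \<Rightarrow> nat \<Rightarrow> nat \<Rightarrow> nat \<Rightarrow> bool" where
  "Tr n m x y z \<longleftrightarrow> distinct [x,y,z] \<and> crossing_product n m (cyc x y z)"

lemma Tr_rot: "Tr n m x y z \<Longrightarrow> Tr n m y z x"
  unfolding Tr_def using cyc_rot by auto

lemma Tr_swap: "Tr n m x y z \<Longrightarrow> Tr n m y x z"
  unfolding Tr_def using cyc_swap cp_comp by (metis distinct_length_2_or_more distinct_singleton)

lemma Tr_A:
  assumes "Tr n m a b c" "Tr n m a b d" "c \<noteq> d"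
  shows "Tr n m a c d"
proof -
  have dd: "distinct [a,b,c,d]" using assms unfolding Tr_def by auto
  have "Tr n m a d b" using assms(2) Tr_rot Tr_swap by blast
  then have "Tr n m a d c" using assms(1) cyc_A[OF dd] cp_comp dd unfolding Tr_def by auto
  then show ?thesis using Tr_rot Tr_swap by blast
qed

lemma Tr_conj:
  assumes "Tr n m x y z" "n \<ge> 1" "1 \<le> j" "j \<le> m - n + 1"
  shows "Tr n m (crossing n j x) (crossing n j y) (crossing n j z)"
proof -
  have inv: "\<And>i. crossing n j (crossing n j i) = i" using cross_invol assms(2) by blast
  then have "inj (crossing n j)" by (metis injI)
  then have d: "distinct [crossing n j x, crossing n j y, crossing n j z]"
    using assms(1) unfolding Tr_def by (auto dest: injD)
  have "crossing_product n m (crossing n j \<circ> cyc x y z \<circ> crossing n j)"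
    using assms cp_comp cp_cross unfolding Tr_def by metis
  then show ?thesis using d cyc_conj[of "crossing n j", OF inv] unfolding Tr_def by simp
qed

lemma Tr_A_basic:
  assumes "k \<ge> 1" "n = 4*k+1" "1 \<le> j" "j + 2 \<le> m - n + 1"
  shows "Tr n m j (j+4*k) (j+4*k+2)"
proof -
  have e: "crossing n j \<circ> crossing n (j+1) \<circ> crossing n (j+2) \<circ> crossing n (j+1) = cyc j (j+4*k) (j+4*k+2)"
    using P1pt[OF assms(1)] assms(2) by (auto simp: fun_eq_iff)
  have "crossing_product n m (crossing n j \<circ> crossing n (j+1) \<circ> crossing n (j+2) \<circ> crossing n (j+1))"
    using assms by (intro cp_comp cp_cross) auto
  then show ?thesis using e assms(1) unfolding Tr_def by auto
qed

lemma Tr_consec: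
  assumes "k \<ge> 1" "n = 4*k+1" "1 \<le> j" "j + 2 \<le> m - n + 1"
  shows "Tr n m j (j+4) (j+2)"
proof -
  have "Tr n m (crossing n (j+2) j) (crossing n (j+2) (j+4*k)) (crossing n (j+2) (j+4*k+2))"
    using Tr_A_basic[OF assms] assms by (intro Tr_conj) auto
  moreover have "crossing n (j+2) j = j" "crossing n (j+2) (j+4*k) = j+4" "crossing n (j+2) (j+4*k+2) = j+2"
    using assms unfolding crossing_def by auto
  ultimately show ?thesis by simp
qed

definition allT :: "nat \<Rightarrow> nat \<Rightarrow> nat set \<Rightarrow> bool" where
  "allT n m S \<longleftrightarrow> (\<forall>x\<in>S. \<forall>y\<in>S. \<forall>z\<in>S. distinct [x,y,z] \<longrightarrow> Tr n m x y z)"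

lemma Tr_two:
  assumes "allT n m S" "Tr n m u v w" "u \<in> S" "v \<in> S" "x \<in> S" "y \<in> S" "x \<noteq> y" "w \<notin> S"
  shows "Tr n m x y w"
proof -
  have uv: "u \<noteq> v" using assms(2) unfolding Tr_def by auto
  have T: "\<And>p q r. p \<in> S \<Longrightarrow> q \<in> S \<Longrightarrow> r \<in> S \<Longrightarrow> distinct [p,q,r] \<Longrightarrow> Tr n m p q r"
    using assms(1) unfolding allT_def by blast
  have one: "Tr n m u p w" if "p \<in> S" "p \<noteq> u" for p
  proof (cases "p = v")
    case True then show ?thesis using assms(2) by simp
  next
    case False
    have "Tr n m u v p" using T[of u v p] that assms uv False by auto
    then have "Tr n m u w p" using Tr_A[OF assms(2)] assms(8) that by blast
    then show ?thesis using Tr_rot Tr_swap by blast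
  qed
  show ?thesis
  proof (cases "x = u \<or> y = u")
    case True
    then show ?thesis using one assms Tr_rot Tr_swap by (metis)
  next
    case False
    have "Tr n m u x w" using one assms False by auto
    moreover have "Tr n m u x y" using T[of u x y] assms False by auto
    ultimately have "Tr n m x u w" "Tr n m x u y" using Tr_swap by blast+
    then have "Tr n m x w y" using Tr_A assms by (metis)
    then show ?thesis using Tr_rot Tr_swap by blast
  qed
qed

lemma allT_ext:
  assumes "allT n m S" "Tr n m u v w" "u \<in> S" "v \<in> S" "w \<notin> S"
  shows "allT n m (insert w S)"
  unfolding allT_def
proof (intro ballI impI)
  fix x y z assume xs: "x \<in> insert w S" "y \<in> insert w S" "z \<in> insert w S" and d: "distinct [x,y,z]"
  have T: "\<And>x y. x \<in> S \<Longrightarrow> y \<in> S \<Longrightarrow> x \<noteq> y \<Longrightarrow> Tr n m x y w"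
    using Tr_two assms by blast
  show "Tr n m x y z"
  proof (cases "x = w")
    case True then show ?thesis using T[of y z] xs d Tr_rot by auto
  next
    case F1: False
    show ?thesis
    proof (cases "y = w")
      case True then show ?thesis using T[of z x] xs d F1 Tr_rot by auto
    next
      case False
      show ?thesis
      proof (cases "z = w")
        case True then show ?thesis using T[of x y] xs d by auto
      next
        case False then show ?thesis using assms(1) xs d F1 \<open>y \<noteq> w\<close> unfolding allT_def by auto
      qed
    qed
  qed
qed

lemma allT3:
  assumes "Tr n m x y z" shows "allT n m {x,y,z}"
proof -
  have "Tr n m x y z" "Tr n m y z x" "Tr n m z x y" "Tr n m y x z" "Tr n m x z y" "Tr n m z y x"
    using assms Tr_rot Tr_swap by blast+
  then show ?thesis unfolding allT_def by auto
qed

definition Sq :: "bool \<Rightarrow> nat \<Rightarrow> nat set" where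
  "Sq q w = {x. 1 \<le> x \<and> x \<le> w \<and> odd x = q}"

lemma allT_S:
  assumes "k \<ge> 1" "n = 4*k+1" "m \<ge> 3*n-2" "6 \<le> w" "w \<le> m"
  shows "allT n m (Sq q w)"
  using assms(4,5)
proof (induction w rule: dec_induct)
  case base
  show ?case
  proof (cases q)
    case True
    have "Sq q 6 = {1,5,3}" using True unfolding Sq_def by (auto simp: le_Suc_eq numeral_eq_Suc; presburger)
    moreover have "Tr n m 1 (1+4) (1+2)" using assms by (intro Tr_consec) auto
    moreover have "(1::nat)+4 = 5" "(1::nat)+2 = 3" by simp_all
    ultimately have "Tr n m 1 5 3" by (simp only:)
    with \<open>Sq q 6 = {1,5,3}\<close> show ?thesis using allT3 by metis
  next
    case False
    have "Sq q 6 = {2,6,4}" using False unfolding Sq_def by (auto simp: le_Suc_eq numeral_eq_Suc; presburger)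
    moreover have "Tr n m 2 (2+4) (2+2)" using assms by (intro Tr_consec) auto
    moreover have "(2::nat)+4 = 6" "(2::nat)+2 = 4" by simp_all
    ultimately have "Tr n m 2 6 4" by (simp only:)
    with \<open>Sq q 6 = {2,6,4}\<close> show ?thesis using allT3 by metis
  qed
next
  case (step w)
  show ?case
  proof (cases "odd (Suc w) = q")
    case False
    then have "Sq q (Suc w) = Sq q w" unfolding Sq_def by (auto simp: le_Suc_eq)
    then show ?thesis using step by simp
  next
    case True
    then have e: "Sq q (Suc w) = insert (Suc w) (Sq q w)" unfolding Sq_def by (auto simp: le_Suc_eq)
    have nin: "Suc w \<notin> Sq q w" unfolding Sq_def by auto
    have IH: "allT n m (Sq q w)" using step by simp
    show ?thesis
    proof (cases "Suc w \<le> 4*k+2")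
      case True
      define j where "j = Suc w - 4"
      have "Tr n m j (j+4) (j+2)" using assms step True unfolding j_def by (intro Tr_consec) auto
      then have "Tr n m j (j+2) (j+4)" using Tr_rot Tr_swap by blast
      moreover have "j + 4 = Suc w" using step unfolding j_def by auto
      ultimately have "Tr n m j (j+2) (Suc w)" by simp
      moreover have "j \<in> Sq q w" "j+2 \<in> Sq q w" using \<open>odd (Suc w) = q\<close> step unfolding j_def Sq_def by auto
      ultimately show ?thesis using e nin IH allT_ext[of n m "Sq q w"] by simp
    next
      case False
      define j where "j = Suc w - (4*k+2)"
      have "Tr n m j (j+4*k) (j+4*k+2)" using assms step False unfolding j_def by (intro Tr_A_basic) auto
      moreover have "j+4*k+2 = Suc w" using False unfolding j_def by auto
      moreover have "j \<in> Sq q w" "j+4*k \<in> Sq q w" using \<open>odd (Suc w) = q\<close> step False unfolding j_def Sq_def by auto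
      ultimately show ?thesis using e nin IH allT_ext[of n m "Sq q w"] by simp
    qed
  qed
qed

theorem lemma4p4:
  fixes k n m a b :: nat
  assumes "k \<ge> 1" and "n = 4 * k + 1" and "m \<ge> 3 * n - 2"
    and "1 \<le> a" and "a + 2 \<le> m" and "1 \<le> b" and "b + 2 \<le> m"
    and "(even a \<and> even b) \<or> (odd a \<and> odd b)"
    and "distinct [a, a + 2, b, b + 2]"
  shows "crossing_product n m (transpose a (a + 2) \<circ> transpose b (b + 2))"
proof -
  have A: "allT n m (Sq (odd a) m)" using assms by (intro allT_S[of k]) auto
  have mem: "a \<in> Sq (odd a) m" "a+2 \<in> Sq (odd a) m" "b \<in> Sq (odd a) m" "b+2 \<in> Sq (odd a) m"
    using assms unfolding Sq_def by auto
  have "Tr n m a b (a+2)" "Tr n m a b (b+2)" using A mem assms(9) unfolding allT_def by auto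
  then have "crossing_product n m (cyc a b (a+2) \<circ> cyc a b (b+2))"
    unfolding Tr_def by (intro cp_comp) auto
  then show ?thesis by (simp only: target[OF assms(9)])
qed

end
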